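(* Let $G$ be a finite $4$-valent graph (loops and multiple edges allowed) embedded in the plane, and let $P$ be a face (polygon) of this embedding. Then no two sides of $P$ are the same edge of $G$; that is, no edge of $G$ occurs twice in the boundary of $P$.
   Context: A polygon in a planar graph is a face of the planar embedding; its sides are the edges traversed along its boundary. *)

theory Defs
  imports Main
begin

text \<open>A map is given by a finite set of
darts D (half-edges), a fixed-point-free involution alpha on D pairing the two
darts of each edge (a loop also has two darts), and a permutation sigma of D whose
cycles list the darts around each vertex in the cyclic order of the embedding.
Vertices are sigma-orbits, edges are alpha-orbits, faces (polygons) are orbits
of the face permutation sigma o alpha; a face's sides are the edges of its darts
in the order of the boundary walk.\<close>

definition orbit :: "('a \<Rightarrow> 'a) \<Rightarrow> 'a \<Rightarrow> 'a set" where
  "orbit f x = {(f ^^ n) x | n. True}"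

definition comb_map :: "'a set \<Rightarrow> ('a \<Rightarrow> 'a) \<Rightarrow> ('a \<Rightarrow> 'a) \<Rightarrow> bool" where
  "comb_map D \<alpha> \<sigma> \<longleftrightarrow> finite D \<and> bij_betw \<sigma> D D \<and>
     (\<forall>d\<in>D. \<alpha> d \<in> D \<and> \<alpha> (\<alpha> d) = d \<and> \<alpha> d \<noteq> d)"

definition map_vertices :: "'a set \<Rightarrow> ('a \<Rightarrow> 'a) \<Rightarrow> 'a set set" where
  "map_vertices D \<sigma> = (\<lambda>d. orbit \<sigma> d) ` D"

definition dart_edge :: "('a \<Rightarrow> 'a) \<Rightarrow> 'a \<Rightarrow> 'a set" where
  "dart_edge \<alpha> d = {d, \<alpha> d}"

definition map_edges :: "'a set \<Rightarrow> ('a \<Rightarrow> 'a) \<Rightarrow> 'a set set" where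
  "map_edges D \<alpha> = dart_edge \<alpha> ` D"

definition face_perm :: "('a \<Rightarrow> 'a) \<Rightarrow> ('a \<Rightarrow> 'a) \<Rightarrow> 'a \<Rightarrow> 'a" where
  "face_perm \<alpha> \<sigma> = \<sigma> \<circ> \<alpha>"

definition map_faces :: "'a set \<Rightarrow> ('a \<Rightarrow> 'a) \<Rightarrow> ('a \<Rightarrow> 'a) \<Rightarrow> 'a set set" where
  "map_faces D \<alpha> \<sigma> = (\<lambda>d. orbit (face_perm \<alpha> \<sigma>) d) ` D"

definition map_conn :: "'a set \<Rightarrow> ('a \<Rightarrow> 'a) \<Rightarrow> ('a \<Rightarrow> 'a) \<Rightarrow> ('a \<times> 'a) set" where
  "map_conn D \<alpha> \<sigma> = ({(x, \<alpha> x) | x. x \<in> D} \<union> {(x, \<sigma> x) | x. x \<in> D}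
                       \<union> {(\<alpha> x, x) | x. x \<in> D} \<union> {(\<sigma> x, x) | x. x \<in> D})\<^sup>*"

definition map_components :: "'a set \<Rightarrow> ('a \<Rightarrow> 'a) \<Rightarrow> ('a \<Rightarrow> 'a) \<Rightarrow> 'a set set" where
  "map_components D \<alpha> \<sigma> = D // map_conn D \<alpha> \<sigma>"

text \<open>Plane (genus 0) map: every connected component is spherical, i.e.
V - E + F = 2 * (number of components).\<close>
definition plane_map :: "'a set \<Rightarrow> ('a \<Rightarrow> 'a) \<Rightarrow> ('a \<Rightarrow> 'a) \<Rightarrow> bool" where
  "plane_map D \<alpha> \<sigma> \<longleftrightarrow> comb_map D \<alpha> \<sigma> \<and>
     int (card (map_vertices D \<sigma>)) - int (card (map_edges D \<alpha>)) + int (card (map_faces D \<alpha> \<sigma>))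
       = 2 * int (card (map_components D \<alpha> \<sigma>))"

definition four_valent :: "'a set \<Rightarrow> ('a \<Rightarrow> 'a) \<Rightarrow> bool" where
  "four_valent D \<sigma> \<longleftrightarrow> (\<forall>v\<in>map_vertices D \<sigma>. card v = 4)"

end

theory Submission
  imports Defs
begin

definition tr :: "'a \<Rightarrow> 'a \<Rightarrow> 'a \<Rightarrow> 'a" where
  "tr a b x = (if x = a then b else if x = b then a else x)"

lemma tr_tr[simp]: "tr a b (tr a b x) = x" by (auto simp: tr_def)

lemma bij_tr: "a \<in> D \<Longrightarrow> b \<in> D \<Longrightarrow> bij_betw (tr a b) D D"
  by (rule bij_betw_byWitness[where f'="tr a b"]) (auto simp: tr_def)

lemma in_orbit: "(f ^^ n) x \<in> orbit f x" by (auto simp: orbit_def)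

lemma self_in_orbit: "x \<in> orbit f x" using in_orbit[where n=0 and f=f and x=x] by simp

lemma orbitE: "y \<in> orbit f x \<Longrightarrow> (\<And>n. y = (f^^n) x \<Longrightarrow> P) \<Longrightarrow> P"
  by (auto simp: orbit_def)

lemma step_in_orbit: assumes "y \<in> orbit f x" shows "f y \<in> orbit f x"
proof -
  obtain n where "y = (f^^n) x" using assms by (rule orbitE)
  then have "f y = (f^^Suc n) x" by simp
  then show ?thesis by (metis in_orbit)
qed

lemma orbit_closed:
  assumes "x \<in> S" "\<And>y. y \<in> S \<Longrightarrow> f y \<in> S" shows "orbit f x \<subseteq> S"
proof
  fix y assume "y \<in> orbit f x"
  then obtain n where "y = (f^^n) x" by (rule orbitE)
  moreover have "(f^^n) x \<in> S" for n by (induction n) (use assms in auto)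
  ultimately show "y \<in> S" by simp
qed

lemma orbit_agree:
  assumes "\<And>y. y \<in> orbit f x \<Longrightarrow> g y = f y" shows "orbit g x = orbit f x"
proof -
  have "(g^^n) x = (f^^n) x" for n
    by (induction n) (auto simp: assms in_orbit)
  then show ?thesis by (simp add: orbit_def)
qed

lemma funpow_in_D: "f ` D \<subseteq> D \<Longrightarrow> x \<in> D \<Longrightarrow> (f^^n) x \<in> D"
  by (induction n) auto

lemma orbit_sub_D: "f ` D \<subseteq> D \<Longrightarrow> x \<in> D \<Longrightarrow> orbit f x \<subseteq> D"
  by (rule orbit_closed) auto

lemma inj_funpow_D: "inj_on f D \<Longrightarrow> f ` D \<subseteq> D \<Longrightarrow> inj_on (f^^n) D"
proof (induction n)
  case 0 then show ?case by simp
next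
  case (Suc n)
  have "inj_on (f \<circ> (f^^n)) D"
    using Suc by (intro comp_inj_on) (auto intro: inj_on_subset funpow_in_D)
  then show ?case by (simp add: comp_def)
qed

lemma funpow_split: "m \<le> j \<Longrightarrow> (f^^j) x = (f^^m) ((f^^(j-m)) x)"
  by (metis funpow_add comp_apply le_add_diff_inverse)

lemma funpow_cancel:
  assumes "inj_on f D" "f ` D \<subseteq> D" "x \<in> D" "m \<le> j" "(f^^j) x = (f^^m) x"
  shows "(f^^(j-m)) x = x"
proof -
  have "(f^^m) ((f^^(j-m)) x) = (f^^m) x" using assms funpow_split by metis
  moreover have "(f^^(j-m)) x \<in> D" using assms funpow_in_D by metis
  ultimately show ?thesis using inj_funpow_D[OF assms(1,2), of m] assms(3)
    by (auto simp: inj_on_def)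
qed

lemma perm_return:
  assumes "finite D" "bij_betw f D D" "x \<in> D" shows "\<exists>n>0. (f^^n) x = x"
proof -
  have fD: "f ` D \<subseteq> D" "inj_on f D" using assms(2) by (auto simp: bij_betw_def)
  have "range (\<lambda>n. (f^^n) x) \<subseteq> D" using funpow_in_D[OF fD(1) assms(3)] by auto
  then have "finite (range (\<lambda>n. (f^^n) x))" using assms(1) finite_subset by blast
  then have "\<not> inj (\<lambda>n. (f^^n) x)" using finite_imageD infinite_UNIV_nat by blast
  then obtain i j where ij: "i \<noteq> j" "(f^^i) x = (f^^j) x" by (auto simp: inj_def)
  show ?thesis
  proof (cases "i < j")
    case True
    then have "(f^^(j-i)) x = x" using funpow_cancel[OF fD(2,1) assms(3), of i j] ij by simp
    then show ?thesis using True by (intro exI[of _ "j-i"]) auto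
  next
    case False
    then have "j < i" using ij by simp
    then have "(f^^(i-j)) x = x" using funpow_cancel[OF fD(2,1) assms(3), of j i] ij by simp
    then show ?thesis using \<open>j < i\<close> by (intro exI[of _ "i-j"]) auto
  qed
qed

definition per :: "('a \<Rightarrow> 'a) \<Rightarrow> 'a \<Rightarrow> nat" where
  "per f x = (LEAST n. 0 < n \<and> (f^^n) x = x)"

lemma per:
  assumes "finite D" "bij_betw f D D" "x \<in> D"
  shows "0 < per f x" "(f^^per f x) x = x" "0 < k \<Longrightarrow> k < per f x \<Longrightarrow> (f^^k) x \<noteq> x"
proof -
  obtain n where "0 < n \<and> (f^^n) x = x" using perm_return[OF assms] by blast
  then have "0 < per f x \<and> (f^^per f x) x = x" unfolding per_def by (rule LeastI)
  then show "0 < per f x" "(f^^per f x) x = x" by auto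
  show "0 < k \<Longrightarrow> k < per f x \<Longrightarrow> (f^^k) x \<noteq> x"
    unfolding per_def using not_less_Least by blast
qed

lemma funpow_mod:
  assumes "(f^^p) x = x" shows "(f^^n) x = (f^^(n mod p)) x"
proof -
  have k: "(f^^(p*k)) x = x" for k
  proof (induction k)
    case (Suc k)
    have "(f^^(p*Suc k)) x = (f^^p) ((f^^(p*k)) x)" by (simp add: funpow_add)
    then show ?case using Suc assms by simp
  qed simp
  have "n = n mod p + p * (n div p)" by simp
  then have "(f^^n) x = (f^^(n mod p)) ((f^^(p * (n div p))) x)" by (metis funpow_add comp_apply)
  then show ?thesis using k by simp
qed

lemma orbit_trans: "y \<in> orbit f x \<Longrightarrow> orbit f y \<subseteq> orbit f x"
  by (rule orbit_closed) (auto intro: step_in_orbit)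

lemma orbit_sym:
  assumes "finite D" "bij_betw f D D" "x \<in> D" "y \<in> orbit f x" shows "x \<in> orbit f y"
proof -
  obtain m where m: "y = (f^^m) x" using assms(4) by (rule orbitE)
  define p where "p = per f x"
  have p: "0 < p" "(f^^p) x = x" using per[OF assms(1-3)] p_def by auto
  have "(f^^(p*m)) x = x" using funpow_mod[OF p(2), of "p*m"] by simp
  moreover have "m \<le> p*m" using p by simp
  moreover have "(f^^(p*m - m)) y = (f^^(p*m - m + m)) x" by (simp add: m funpow_add)
  ultimately have "(f^^(p*m - m)) y = x" by simp
  then show ?thesis using in_orbit by metis
qed

lemma orbit_eq:
  assumes "finite D" "bij_betw f D D" "x \<in> D" "y \<in> orbit f x" shows "orbit f y = orbit f x"
proof
  show "orbit f y \<subseteq> orbit f x" using orbit_trans[OF assms(4)] .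
  show "orbit f x \<subseteq> orbit f y" using orbit_trans[OF orbit_sym[OF assms]] .
qed

definition cycs :: "'a set \<Rightarrow> ('a \<Rightarrow> 'a) \<Rightarrow> 'a set set" where
  "cycs D f = (\<lambda>x. orbit f x) ` D"

definition outc :: "'a set \<Rightarrow> ('a \<Rightarrow> 'a) \<Rightarrow> 'a \<Rightarrow> 'a \<Rightarrow> 'a set set" where
  "outc D f a b = {X \<in> cycs D f. a \<notin> X \<and> b \<notin> X}"

lemma outc_sub:
  assumes "\<And>y. y \<noteq> a \<Longrightarrow> y \<noteq> b \<Longrightarrow> g y = f y"
  shows "outc D f a b \<subseteq> outc D g a b"
proof
  fix X assume "X \<in> outc D f a b"
  then obtain x where x: "x \<in> D" "X = orbit f x" "a \<notin> X" "b \<notin> X"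
    by (auto simp: outc_def cycs_def)
  then have "orbit g x = orbit f x" by (intro orbit_agree) (auto intro: assms)
  then show "X \<in> outc D g a b" using x by (auto simp: outc_def cycs_def)
qed

lemma cycs_split:
  assumes "finite D" "bij_betw f D D" "a \<in> D" "b \<in> D"
  shows "card (cycs D f) = card (outc D f a b) + (if b \<in> orbit f a then 1 else 2)"
proof -
  have eq: "cycs D f = outc D f a b \<union> {orbit f a, orbit f b}"
  proof
    show "cycs D f \<subseteq> outc D f a b \<union> {orbit f a, orbit f b}"
    proof
      fix X assume X: "X \<in> cycs D f"
      then obtain x where x: "x \<in> D" "X = orbit f x" by (auto simp: cycs_def)
      show "X \<in> outc D f a b \<union> {orbit f a, orbit f b}"
      proof (cases "a \<in> X \<or> b \<in> X")
        case True
        then show ?thesis using orbit_eq[OF assms(1,2) x(1)] x by auto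
      next
        case False then show ?thesis using X by (auto simp: outc_def)
      qed
    qed
  next
    show "outc D f a b \<union> {orbit f a, orbit f b} \<subseteq> cycs D f"
      using assms by (auto simp: outc_def cycs_def)
  qed
  have fin: "finite (cycs D f)" using assms(1) by (simp add: cycs_def)
  have disj: "outc D f a b \<inter> {orbit f a, orbit f b} = {}"
    by (auto simp: outc_def self_in_orbit)
  have "card (cycs D f) = card (outc D f a b) + card {orbit f a, orbit f b}"
    unfolding eq using fin eq disj by (intro card_Un_disjoint) auto
  moreover have "card {orbit f a, orbit f b} = (if b \<in> orbit f a then 1 else 2)"
  proof (cases "b \<in> orbit f a")
    case True
    then have "orbit f b = orbit f a" using orbit_eq[OF assms(1,2,3)] by blast
    then show ?thesis using True by simp
  next
    case False
    then have "orbit f b \<noteq> orbit f a" using self_in_orbit by metis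
    then show ?thesis using False by simp
  qed
  ultimately show ?thesis by simp
qed

lemma walk_merge:
  assumes "finite D" "bij_betw f D D" "a \<in> D" "b \<in> D" "a \<noteq> b"
    and "b \<notin> orbit f a"
  shows "b \<in> orbit (\<lambda>x. f (tr a b x)) a"
proof -
  define g where "g = (\<lambda>x. f (tr a b x))"
  define p where "p = per f b"
  have p: "0 < p" "(f^^p) b = b" "\<And>k. 0 < k \<Longrightarrow> k < p \<Longrightarrow> (f^^k) b \<noteq> b"
    using per[OF assms(1,2,4)] p_def by auto
  have anb: "a \<notin> orbit f b" using orbit_sym[OF assms(1,2,4)] assms(6) by blast
  have "1 \<le> k \<longrightarrow> k \<le> p \<longrightarrow> (g^^k) a = (f^^k) b" for k
  proof (induction k)
    case 0 then show ?case by simp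
  next
    case (Suc k)
    show ?case
    proof (cases "k = 0")
      case True then show ?thesis by (simp add: g_def tr_def)
    next
      case False
      show ?thesis
      proof (intro impI)
        assume "Suc k \<le> p"
        then have k: "0 < k" "k < p" using False by auto
        then have IH: "(g^^k) a = (f^^k) b" using Suc by simp
        have "(f^^k) b \<noteq> b" using p(3) k by blast
        moreover have "(f^^k) b \<noteq> a" using anb in_orbit by metis
        ultimately have "g ((f^^k) b) = f ((f^^k) b)" by (simp add: g_def tr_def)
        then show "(g^^Suc k) a = (f^^Suc k) b" using IH by simp
      qed
    qed
  qed
  then have "(g^^p) a = b" using p by simp
  then show ?thesis unfolding g_def[symmetric] using in_orbit by metis
qed

lemma walk_split:
  assumes "finite D" "bij_betw f D D" "a \<in> D" "b \<in> D" "a \<noteq> b"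
    and "b \<in> orbit f a"
  shows "b \<notin> orbit (\<lambda>x. f (tr a b x)) a"
proof -
  define g where "g = (\<lambda>x. f (tr a b x))"
  have fD: "f ` D \<subseteq> D" "inj_on f D" using assms(2) by (auto simp: bij_betw_def)
  define p where "p = per f a"
  have p: "0 < p" "(f^^p) a = a" "\<And>k. 0 < k \<Longrightarrow> k < p \<Longrightarrow> (f^^k) a \<noteq> a"
    using per[OF assms(1,2,3)] p_def by auto
  obtain m0 where "b = (f^^m0) a" using assms(6) by (rule orbitE)
  define m where "m = m0 mod p"
  have bm: "b = (f^^m) a" using funpow_mod[OF p(2)] \<open>b = _\<close> m_def by simp
  have mp: "m < p" using p(1) m_def by simp
  have m0: "m \<noteq> 0" using bm assms(5) by (cases m) auto
  define S where "S = {(f^^j) a | j. m < j \<and> j \<le> p}"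
  have aS: "a \<in> S" unfolding S_def using mp p(2) by (intro CollectI exI[of _ p]) auto
  have neqm: "(f^^j) a \<noteq> (f^^m) a" if "m < j" "j \<le> p" for j
  proof
    assume "(f^^j) a = (f^^m) a"
    then have "(f^^(j-m)) a = a" using funpow_cancel[OF fD(2,1) assms(3), of m j] that by simp
    moreover have "0 < j - m" "j - m < p" using that m0 by auto
    ultimately show False using p(3) by blast
  qed
  have cl: "g y \<in> S" if "y \<in> S" for y
  proof -
    obtain j where j: "y = (f^^j) a" "m < j" "j \<le> p" using \<open>y \<in> S\<close> S_def by auto
    show ?thesis
    proof (cases "j = p")
      case True
      then have "y = a" using j p by simp
      then have "g y = (f^^Suc m) a" using bm by (simp add: g_def tr_def)
      then show ?thesis unfolding S_def using mp by (intro CollectI exI[of _ "Suc m"]) auto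
    next
      case False
      then have "y \<noteq> a" using j p(3) by auto
      moreover have "y \<noteq> b" using neqm j bm by auto
      ultimately have "g y = (f^^Suc j) a" using j by (simp add: g_def tr_def)
      then show ?thesis unfolding S_def using j False by (intro CollectI exI[of _ "Suc j"]) auto
    qed
  qed
  have "orbit g a \<subseteq> S" using aS cl by (rule orbit_closed)
  moreover have "b \<notin> S"
  proof
    assume "b \<in> S"
    then obtain j where "b = (f^^j) a" "m < j" "j \<le> p" unfolding S_def by auto
    then show False using neqm bm by metis
  qed
  ultimately show ?thesis unfolding g_def by blast
qed

lemma bij_comp_tr:
  "bij_betw f D D \<Longrightarrow> a \<in> D \<Longrightarrow> b \<in> D \<Longrightarrow> bij_betw (\<lambda>x. f (tr a b x)) D D"
proof -
  assume f: "bij_betw f D D" and ab: "a \<in> D" "b \<in> D"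
  have "bij_betw (f \<circ> tr a b) D D" by (rule bij_betw_trans[OF bij_tr[OF ab] f])
  then show ?thesis by (simp add: comp_def)
qed

lemma cyc_tr:
  assumes "finite D" "bij_betw f D D" "a \<in> D" "b \<in> D" "a \<noteq> b"
  shows "b \<in> orbit f a \<Longrightarrow> card (cycs D (\<lambda>x. f (tr a b x))) = card (cycs D f) + 1"
    and "b \<notin> orbit f a \<Longrightarrow> card (cycs D f) = card (cycs D (\<lambda>x. f (tr a b x))) + 1"
proof -
  define g where "g = (\<lambda>x. f (tr a b x))"
  have g: "bij_betw g D D" using bij_comp_tr assms g_def by metis
  have "outc D f a b \<subseteq> outc D g a b" by (rule outc_sub) (auto simp: g_def tr_def)
  moreover have "outc D g a b \<subseteq> outc D f a b" by (rule outc_sub) (auto simp: g_def tr_def)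
  ultimately have o: "outc D g a b = outc D f a b" by blast
  have cf: "card (cycs D f) = card (outc D f a b) + (if b \<in> orbit f a then 1 else 2)"
    using cycs_split[OF assms(1-4)] .
  have cg: "card (cycs D g) = card (outc D f a b) + (if b \<in> orbit g a then 1 else 2)"
    using cycs_split[OF assms(1) g assms(3,4)] o by simp
  show "b \<in> orbit f a \<Longrightarrow> card (cycs D (\<lambda>x. f (tr a b x))) = card (cycs D f) + 1"
    using walk_split[OF assms] cf cg unfolding g_def by simp
  show "b \<notin> orbit f a \<Longrightarrow> card (cycs D f) = card (cycs D (\<lambda>x. f (tr a b x))) + 1"
    using walk_merge[OF assms] cf cg unfolding g_def by simp
qed

lemma eq_class: "sym r \<Longrightarrow> trans r \<Longrightarrow> (x,y) \<in> r \<Longrightarrow> r``{x} = r``{y}"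
  unfolding sym_def trans_def by blast

lemma quot_img: "D // r = (\<lambda>x. r``{x}) ` D"
  by (auto simp: quotient_def)

lemma quot_lemma:
  assumes fin: "finite D"
    and R'refl: "\<And>x. (x,x) \<in> R'" and R'sym: "sym R'" and R'trans: "trans R'"
    and sub: "R' \<subseteq> R" and Rtrans: "trans R"
    and dec: "\<And>x y. (x,y) \<in> R \<Longrightarrow> (x,y) \<in> R' \<or> (((x,a)\<in>R' \<or> (x,b)\<in>R') \<and> ((a,y)\<in>R' \<or> (b,y)\<in>R'))"
  shows "card (D//R') \<le> card (D//R) + 1" and "(a,b) \<in> R' \<Longrightarrow> D//R' = D//R"
proof -
  have symE: "(x,y) \<in> R' \<Longrightarrow> (y,x) \<in> R'" for x y using R'sym by (auto simp: sym_def)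
  have trE: "(x,y) \<in> R' \<Longrightarrow> (y,z) \<in> R' \<Longrightarrow> (x,z) \<in> R'" for x y z
    using R'trans by (auto simp: trans_def)
  show "(a,b) \<in> R' \<Longrightarrow> D//R' = D//R"
  proof -
    assume ab: "(a,b) \<in> R'"
    have "R \<subseteq> R'"
    proof
      fix p assume "p \<in> R"
      then obtain x y where p: "p = (x,y)" "(x,y) \<in> R" by (cases p) auto
      from dec[OF p(2)] show "p \<in> R'" unfolding p(1)
        using ab symE trE by metis
    qed
    then show ?thesis using sub by (metis subset_antisym)
  qed
  define D1 where "D1 = {x\<in>D. (x,b) \<notin> R'}"
  have "D//R' \<subseteq> insert (R'``{b}) ((\<lambda>x. R'``{x}) ` D1)"
  proof
    fix X assume "X \<in> D//R'"
    then obtain x where x: "x \<in> D" "X = R'``{x}" by (auto simp: quot_img)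
    show "X \<in> insert (R'``{b}) ((\<lambda>x. R'``{x}) ` D1)"
    proof (cases "(x,b) \<in> R'")
      case True then show ?thesis using eq_class[OF R'sym R'trans True] x by simp
    next
      case False then show ?thesis using x D1_def by auto
    qed
  qed
  moreover have fi: "finite ((\<lambda>x. R'``{x}) ` D1)" using fin D1_def by simp
  ultimately have "card (D//R') \<le> card (insert (R'``{b}) ((\<lambda>x. R'``{x}) ` D1))"
    by (intro card_mono) auto
  also have "\<dots> \<le> card ((\<lambda>x. R'``{x}) ` D1) + 1" using fi by (simp add: card_insert_if)
  finally have c1: "card (D//R') \<le> card ((\<lambda>x. R'``{x}) ` D1) + 1" .
  have F: "R``(R'``{x}) = R``{x}" for x
  proof
    show "R``(R'``{x}) \<subseteq> R``{x}" using sub Rtrans by (auto simp: trans_def)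
    show "R``{x} \<subseteq> R``(R'``{x})" using R'refl by auto
  qed
  have Rrefl: "(x,x) \<in> R" for x using R'refl sub by auto
  have inj: "inj_on (\<lambda>X. R``X) ((\<lambda>x. R'``{x}) ` D1)"
  proof (rule inj_onI)
    fix X Y assume "X \<in> (\<lambda>x. R'``{x}) ` D1" "Y \<in> (\<lambda>x. R'``{x}) ` D1" "R``X = R``Y"
    then obtain x y where xy: "x \<in> D1" "y \<in> D1" "X = R'``{x}" "Y = R'``{y}" "R``{x} = R``{y}"
      using F by auto
    then have "(x,y) \<in> R" using Rrefl by blast
    from dec[OF this] have "(x,y) \<in> R'"
    proof
      assume h: "((x,a)\<in>R' \<or> (x,b)\<in>R') \<and> ((a,y)\<in>R' \<or> (b,y)\<in>R')"
      have "(x,b) \<notin> R'" "(y,b) \<notin> R'" using xy D1_def by auto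
      then show "(x,y) \<in> R'" using h symE trE by metis
    qed
    then show "X = Y" using xy eq_class[OF R'sym R'trans] by simp
  qed
  have "(\<lambda>X. R``X) ` ((\<lambda>x. R'``{x}) ` D1) \<subseteq> D//R"
    using F D1_def by (auto simp: quot_img)
  then have "card ((\<lambda>x. R'``{x}) ` D1) \<le> card (D//R)"
    using inj fin by (intro card_inj_on_le) (auto simp: quot_img)
  then show "card (D//R') \<le> card (D//R) + 1" using c1 by simp
qed

definition stp :: "'a set \<Rightarrow> ('a \<Rightarrow> 'a) \<Rightarrow> ('a \<Rightarrow> 'a) \<Rightarrow> ('a \<times> 'a) set" where
  "stp D \<alpha> \<sigma> = {(x, \<alpha> x) | x. x \<in> D} \<union> {(x, \<sigma> x) | x. x \<in> D}
                       \<union> {(\<alpha> x, x) | x. x \<in> D} \<union> {(\<sigma> x, x) | x. x \<in> D}"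

lemma conn_def': "map_conn D \<alpha> \<sigma> = (stp D \<alpha> \<sigma>)\<^sup>*"
  by (simp add: map_conn_def stp_def)

lemma conn_refl: "(x,x) \<in> map_conn D \<alpha> \<sigma>" by (simp add: conn_def')

lemma conn_sym: "sym (map_conn D \<alpha> \<sigma>)"
  unfolding conn_def' by (rule sym_rtrancl) (auto simp: sym_def stp_def)

lemma conn_trans: "trans (map_conn D \<alpha> \<sigma>)"
  unfolding conn_def' by (rule trans_rtrancl)

lemma conn_symE: "(x,y) \<in> map_conn D \<alpha> \<sigma> \<Longrightarrow> (y,x) \<in> map_conn D \<alpha> \<sigma>"
  using conn_sym by (metis symD)

lemma conn_transE: "(x,y) \<in> map_conn D \<alpha> \<sigma> \<Longrightarrow> (y,z) \<in> map_conn D \<alpha> \<sigma> \<Longrightarrow> (x,z) \<in> map_conn D \<alpha> \<sigma>"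
  using conn_trans by (metis transD)

lemma conn_steps:
  assumes "x \<in> D"
  shows "(x, \<alpha> x) \<in> map_conn D \<alpha> \<sigma>" "(x, \<sigma> x) \<in> map_conn D \<alpha> \<sigma>"
    "(\<alpha> x, x) \<in> map_conn D \<alpha> \<sigma>" "(\<sigma> x, x) \<in> map_conn D \<alpha> \<sigma>"
  using assms unfolding conn_def' stp_def by blast+

lemma conn_in_D:
  assumes "\<alpha> ` D \<subseteq> D" "\<sigma> ` D \<subseteq> D" "(x,y) \<in> map_conn D \<alpha> \<sigma>" "x \<in> D"
  shows "y \<in> D"
  using assms(3,4) unfolding conn_def'
  by (induction rule: rtrancl_induct) (use assms(1,2) in \<open>auto simp: stp_def\<close>)

lemma conn_orbit:
  assumes "\<alpha> ` D \<subseteq> D" "x \<in> D" "y \<in> orbit (\<lambda>z. \<sigma> (\<alpha> z)) x" "\<sigma> ` D \<subseteq> D"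
  shows "(x,y) \<in> map_conn D \<alpha> \<sigma>"
proof -
  have "((\<lambda>z. \<sigma> (\<alpha> z))^^n) x \<in> D \<and> (x, ((\<lambda>z. \<sigma> (\<alpha> z))^^n) x) \<in> map_conn D \<alpha> \<sigma>" for n
  proof (induction n)
    case 0 then show ?case using assms conn_refl by simp
  next
    case (Suc n)
    define z where "z = ((\<lambda>z. \<sigma> (\<alpha> z))^^n) x"
    have z: "z \<in> D" "(x,z) \<in> map_conn D \<alpha> \<sigma>" using Suc z_def by auto
    have az: "\<alpha> z \<in> D" using z assms(1) by auto
    have "(x, \<sigma> (\<alpha> z)) \<in> map_conn D \<alpha> \<sigma>"
      using conn_transE[OF conn_transE[OF z(2) conn_steps(1)[OF z(1)]] conn_steps(2)[OF az]] .
    moreover have "\<sigma> (\<alpha> z) \<in> D" using az assms(4) by auto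
    ultimately show ?case unfolding z_def by simp
  qed
  then show ?thesis using assms(3) by (auto elim: orbitE)
qed

lemma dec_lemma:
  assumes "(x,y) \<in> (R' \<union> {(a,b),(b,a)})\<^sup>*" "trans R'" "sym R'" "\<And>z. (z,z) \<in> R'"
  shows "(x,y) \<in> R' \<or> (((x,a)\<in>R' \<or> (x,b)\<in>R') \<and> ((a,y)\<in>R' \<or> (b,y)\<in>R'))"
  using assms(1)
proof (induction rule: rtrancl_induct)
  case base then show ?case using assms(4) by simp
next
  case (step y z)
  have trE: "(u,v) \<in> R' \<Longrightarrow> (v,w) \<in> R' \<Longrightarrow> (u,w) \<in> R'" for u v w
    using assms(2) by (auto simp: trans_def)
  from step(2) show ?case
  proof
    assume "(y,z) \<in> R'" then show ?case using step(3) trE by blast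
  next
    assume "(y,z) \<in> {(a,b),(b,a)}"
    then show ?case using step(3) assms(4) trE by blast
  qed
qed

lemma conn_step_lemma:
  assumes aD: "\<alpha> ` D \<subseteq> D" "a \<in> D" "b = \<alpha> a"
  shows "map_conn D (\<lambda>x. \<alpha> (tr a b x)) \<sigma> \<subseteq> map_conn D \<alpha> \<sigma>" (is "?R' \<subseteq> ?R")
    and "(x,y) \<in> map_conn D \<alpha> \<sigma> \<Longrightarrow> (x,y) \<in> map_conn D (\<lambda>x. \<alpha> (tr a b x)) \<sigma> \<or>
          (((x,a)\<in>map_conn D (\<lambda>x. \<alpha> (tr a b x)) \<sigma> \<or> (x,b)\<in>map_conn D (\<lambda>x. \<alpha> (tr a b x)) \<sigma>) \<and>
           ((a,y)\<in>map_conn D (\<lambda>x. \<alpha> (tr a b x)) \<sigma> \<or> (b,y)\<in>map_conn D (\<lambda>x. \<alpha> (tr a b x)) \<sigma>))"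
proof -
  define \<alpha>' where "\<alpha>' = (\<lambda>x. \<alpha> (tr a b x))"
  have bD: "b \<in> D" using aD by auto
  have s1: "(x, \<alpha>' x) \<in> ?R" if "x \<in> D" for x
  proof -
    consider "x = a" | "x \<noteq> a" "x = b" | "x \<noteq> a" "x \<noteq> b" by blast
    then show ?thesis
    proof cases
      case 1
      then have "\<alpha>' x = \<alpha> b" by (simp add: \<alpha>'_def tr_def)
      moreover have "(a,b) \<in> ?R" using conn_steps(1)[OF aD(2), where \<alpha>=\<alpha> and \<sigma>=\<sigma>] aD(3) by simp
      moreover have "(b, \<alpha> b) \<in> ?R" using conn_steps(1)[OF bD, where \<alpha>=\<alpha> and \<sigma>=\<sigma>] by simp
      ultimately show ?thesis using conn_transE 1 by metis
    next
      case 2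
      then have "\<alpha>' x = x" using aD(3) by (simp add: \<alpha>'_def tr_def)
      then show ?thesis using conn_refl by metis
    next
      case 3
      then have "\<alpha>' x = \<alpha> x" by (simp add: \<alpha>'_def tr_def)
      then show ?thesis using conn_steps(1)[OF that] by simp
    qed
  qed
  have "stp D \<alpha>' \<sigma> \<subseteq> ?R"
  proof
    fix p assume "p \<in> stp D \<alpha>' \<sigma>"
    then consider x where "x \<in> D" "p = (x, \<alpha>' x)" | x where "x \<in> D" "p = (x, \<sigma> x)"
      | x where "x \<in> D" "p = (\<alpha>' x, x)" | x where "x \<in> D" "p = (\<sigma> x, x)"
      unfolding stp_def by blast
    then show "p \<in> ?R"
    proof cases
      case 1 then show ?thesis using s1 by simp
    next
      case 2 then show ?thesis using conn_steps(2)[where \<alpha>=\<alpha> and \<sigma>=\<sigma>] by simp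
    next
      case 3 then show ?thesis using conn_symE[OF s1[OF 3(1)]] by simp
    next
      case 4 then show ?thesis using conn_steps(4)[where \<alpha>=\<alpha> and \<sigma>=\<sigma>] by simp
    qed
  qed
  then have "(stp D \<alpha>' \<sigma>)\<^sup>* \<subseteq> ?R\<^sup>*" by (rule rtrancl_mono)
  then show "?R' \<subseteq> ?R" unfolding \<alpha>'_def[symmetric] by (simp add: conn_def')
  define E where "E = ?R' \<union> {(a,b),(b,a)}"
  have symE: "sym E" unfolding E_def sym_def
    using conn_symE[where D=D and \<alpha>="\<lambda>x. \<alpha> (tr a b x)" and \<sigma>=\<sigma>] by blast
  have s2: "(x, \<alpha> x) \<in> E\<^sup>*" if "x \<in> D" for x
  proof -
    consider "x = a" | "x \<noteq> a" "x = b" | "x \<noteq> a" "x \<noteq> b" by blast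
    then show ?thesis
    proof cases
      case 1
      then have "(x, \<alpha> x) \<in> E" using aD(3) E_def by simp
      then show ?thesis by (rule r_into_rtrancl)
    next
      case 2
      then have "\<alpha> x = \<alpha>' a" by (simp add: \<alpha>'_def tr_def)
      moreover have "(x, a) \<in> E" using 2 E_def by auto
      moreover have "(a, \<alpha>' a) \<in> E" using conn_steps(1)[OF aD(2), where \<alpha>="\<alpha>'" and \<sigma>=\<sigma>] E_def \<alpha>'_def by auto
      ultimately show ?thesis by (metis converse_rtrancl_into_rtrancl r_into_rtrancl)
    next
      case 3
      then have "\<alpha> x = \<alpha>' x" by (simp add: \<alpha>'_def tr_def)
      then show ?thesis using conn_steps(1)[OF that, where \<alpha>="\<alpha>'" and \<sigma>=\<sigma>] E_def \<alpha>'_def by auto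
    qed
  qed
  have s3: "(x, \<sigma> x) \<in> E\<^sup>*" if "x \<in> D" for x
    using conn_steps(2)[OF that, where \<alpha>="\<alpha>'" and \<sigma>=\<sigma>] E_def \<alpha>'_def by auto
  have "stp D \<alpha> \<sigma> \<subseteq> E\<^sup>*"
  proof
    fix p assume "p \<in> stp D \<alpha> \<sigma>"
    then consider x where "x \<in> D" "p = (x, \<alpha> x)" | x where "x \<in> D" "p = (x, \<sigma> x)"
      | x where "x \<in> D" "p = (\<alpha> x, x)" | x where "x \<in> D" "p = (\<sigma> x, x)"
      unfolding stp_def by blast
    then show "p \<in> E\<^sup>*"
    proof cases
      case 1 then show ?thesis using s2 by simp
    next
      case 2 then show ?thesis using s3 by simp
    next
      case 3 then show ?thesis using s2 sym_rtrancl[OF symE] by (metis symD)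
    next
      case 4 then show ?thesis using s3 sym_rtrancl[OF symE] by (metis symD)
    qed
  qed
  then have "(stp D \<alpha> \<sigma>)\<^sup>* \<subseteq> (E\<^sup>*)\<^sup>*" by (rule rtrancl_mono)
  then have "(stp D \<alpha> \<sigma>)\<^sup>* \<subseteq> E\<^sup>*" by simp
  then have "?R \<subseteq> E\<^sup>*" by (simp add: conn_def')
  then show "(x,y) \<in> ?R \<Longrightarrow> (x,y) \<in> ?R' \<or> (((x,a)\<in>?R' \<or> (x,b)\<in>?R') \<and> ((a,y)\<in>?R' \<or> (b,y)\<in>?R'))"
  proof -
    assume "(x,y) \<in> ?R"
    then have "(x,y) \<in> E\<^sup>*" using \<open>?R \<subseteq> E\<^sup>*\<close> by blast
    then show ?thesis unfolding E_def by (rule dec_lemma[OF _ conn_trans conn_sym conn_refl])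
  qed
qed

lemma base_case:
  assumes fin: "finite D" and s: "bij_betw \<sigma> D D" and fx: "\<And>x. x \<in> D \<Longrightarrow> \<alpha> x = x"
  shows "card (cycs D \<sigma>) + card (cycs D \<alpha>) + card (cycs D (\<lambda>x. \<sigma> (\<alpha> x)))
           \<le> card D + 2 * card (D // map_conn D \<alpha> \<sigma>)"
proof -
  have sD: "\<sigma> ` D \<subseteq> D" using s by (auto simp: bij_betw_def)
  have aD: "\<alpha> ` D \<subseteq> D" using fx by auto
  have oa: "orbit \<alpha> x = {x}" if "x \<in> D" for x
    using orbit_closed[of x "{x}" \<alpha>] self_in_orbit[of x \<alpha>] fx[OF that] by auto
  have "cycs D \<alpha> = (\<lambda>x. {x}) ` D" using oa by (auto simp: cycs_def)
  then have c1: "card (cycs D \<alpha>) = card D" by (simp add: card_image)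
  have os: "orbit (\<lambda>x. \<sigma> (\<alpha> x)) x = orbit \<sigma> x" if "x \<in> D" for x
    by (rule orbit_agree) (use orbit_sub_D[OF sD that] fx in auto)
  then have c2: "cycs D (\<lambda>x. \<sigma> (\<alpha> x)) = cycs D \<sigma>" by (auto simp: cycs_def)
  have cl: "map_conn D \<alpha> \<sigma> `` {x} = orbit \<sigma> x" if x: "x \<in> D" for x
  proof
    show "orbit \<sigma> x \<subseteq> map_conn D \<alpha> \<sigma> `` {x}"
      using conn_orbit[OF aD x _ sD] os[OF x] by auto
    show "map_conn D \<alpha> \<sigma> `` {x} \<subseteq> orbit \<sigma> x"
    proof
      fix y assume "y \<in> map_conn D \<alpha> \<sigma> `` {x}"
      then have "(x,y) \<in> (stp D \<alpha> \<sigma>)\<^sup>*" by (simp add: conn_def')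
      then show "y \<in> orbit \<sigma> x"
      proof (induction rule: rtrancl_induct)
        case base then show ?case by (rule self_in_orbit)
      next
        case (step y z)
        from step(2) consider w where "w \<in> D" "y = w" "z = \<alpha> w" | w where "w \<in> D" "y = w" "z = \<sigma> w"
          | w where "w \<in> D" "y = \<alpha> w" "z = w" | w where "w \<in> D" "y = \<sigma> w" "z = w"
          unfolding stp_def by blast
        then show ?case
        proof cases
          case 1 then show ?thesis using step fx by simp
        next
          case 2 then show ?thesis using step step_in_orbit by metis
        next
          case 3 then show ?thesis using step fx by simp
        next
          case 4
          have "\<sigma> w \<in> orbit \<sigma> w" using step_in_orbit self_in_orbit by metis
          then have "w \<in> orbit \<sigma> (\<sigma> w)" using orbit_sym[OF fin s 4(1)] by blast
          moreover have "orbit \<sigma> (\<sigma> w) = orbit \<sigma> x" using orbit_eq[OF fin s x] step(3) 4 by simp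
          ultimately show ?thesis using 4 by simp
        qed
      qed
    qed
  qed
  have "D // map_conn D \<alpha> \<sigma> = cycs D \<sigma>" using cl by (auto simp: quot_img cycs_def)
  then show ?thesis using c1 c2 by simp
qed

lemma euler_ineq:
  assumes fin: "finite D" and s: "bij_betw \<sigma> D D" and "bij_betw \<alpha> D D"
  shows "card (cycs D \<sigma>) + card (cycs D \<alpha>) + card (cycs D (\<lambda>x. \<sigma> (\<alpha> x)))
           \<le> card D + 2 * card (D // map_conn D \<alpha> \<sigma>)"
  using assms(3)
proof (induction "card {x\<in>D. \<alpha> x \<noteq> x}" arbitrary: \<alpha> rule: less_induct)
  case less
  have sD: "\<sigma> ` D \<subseteq> D" using s by (auto simp: bij_betw_def)
  have aD: "\<alpha> ` D \<subseteq> D" "inj_on \<alpha> D" using less(2) by (auto simp: bij_betw_def)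
  show ?case
  proof (cases "\<exists>a\<in>D. \<alpha> a \<noteq> a")
    case False
    then show ?thesis using base_case[OF fin s] by blast
  next
    case True
    then obtain a where a: "a \<in> D" "\<alpha> a \<noteq> a" by blast
    define b where "b = \<alpha> a"
    define \<alpha>' where "\<alpha>' = (\<lambda>x. \<alpha> (tr a b x))"
    have bD: "b \<in> D" using a aD b_def by auto
    have ab: "a \<noteq> b" using a b_def by auto
    have a'bij: "bij_betw \<alpha>' D D" unfolding \<alpha>'_def using bij_comp_tr[OF less(2) a(1) bD] .
    have sub: "{x\<in>D. \<alpha>' x \<noteq> x} \<subseteq> {x\<in>D. \<alpha> x \<noteq> x} - {b}"
      using a by (auto simp: \<alpha>'_def tr_def b_def)
    have "\<alpha> b \<noteq> b"
    proof
      assume "\<alpha> b = b"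
      then have "\<alpha> b = \<alpha> a" using b_def by simp
      then show False using aD(2) a(1) bD ab by (auto simp: inj_on_def)
    qed
    then have "{x\<in>D. \<alpha> x \<noteq> x} - {b} \<subset> {x\<in>D. \<alpha> x \<noteq> x}" using bD by auto
    then have "{x\<in>D. \<alpha>' x \<noteq> x} \<subset> {x\<in>D. \<alpha> x \<noteq> x}" using sub by (rule subset_psubset_trans[rotated])
    then have lt: "card {x\<in>D. \<alpha>' x \<noteq> x} < card {x\<in>D. \<alpha> x \<noteq> x}"
      by (rule psubset_card_mono[rotated]) (use fin in simp)
    have IH: "card (cycs D \<sigma>) + card (cycs D \<alpha>') + card (cycs D (\<lambda>x. \<sigma> (\<alpha>' x)))
           \<le> card D + 2 * card (D // map_conn D \<alpha>' \<sigma>)"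
      using less(1)[OF lt a'bij] .
    have bk: "\<alpha> = (\<lambda>x. \<alpha>' (tr a b x))" by (simp add: \<alpha>'_def)
    have "b \<in> orbit \<alpha> a" using in_orbit[where n=1 and f=\<alpha> and x=a] b_def by simp
    then have ca: "card (cycs D \<alpha>') = card (cycs D \<alpha>) + 1"
      using cyc_tr(1)[OF fin less(2) a(1) bD ab] \<alpha>'_def by simp
    define f where "f = (\<lambda>x. \<sigma> (\<alpha>' x))"
    have fbij: "bij_betw f D D" unfolding f_def using bij_betw_trans[OF a'bij s] by (simp add: comp_def)
    have sa: "(\<lambda>x. \<sigma> (\<alpha> x)) = (\<lambda>x. f (tr a b x))" by (simp add: f_def \<alpha>'_def)
    have Q: "card (D//map_conn D \<alpha>' \<sigma>) \<le> card (D//map_conn D \<alpha> \<sigma>) + 1"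
         "(a,b) \<in> map_conn D \<alpha>' \<sigma> \<Longrightarrow> D//map_conn D \<alpha>' \<sigma> = D//map_conn D \<alpha> \<sigma>"
      using quot_lemma[OF fin conn_refl conn_sym conn_trans conn_step_lemma(1)[OF aD(1) a(1) b_def]
          conn_trans conn_step_lemma(2)[OF aD(1) a(1) b_def]] unfolding \<alpha>'_def by blast+
    show ?thesis
    proof (cases "b \<in> orbit f a")
      case True
      have "(a,b) \<in> map_conn D \<alpha>' \<sigma>"
        using conn_orbit[OF _ a(1) _ sD] True a'bij f_def by (auto simp: bij_betw_def)
      then have "D//map_conn D \<alpha>' \<sigma> = D//map_conn D \<alpha> \<sigma>" using Q(2) by blast
      moreover have "card (cycs D (\<lambda>x. \<sigma> (\<alpha> x))) = card (cycs D f) + 1"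
        using cyc_tr(1)[OF fin fbij a(1) bD ab True] sa by simp
      ultimately show ?thesis using IH ca f_def by simp
    next
      case False
      have "card (cycs D f) = card (cycs D (\<lambda>x. \<sigma> (\<alpha> x))) + 1"
        using cyc_tr(2)[OF fin fbij a(1) bD ab False] sa by simp
      then show ?thesis using IH ca Q(1) f_def by simp
    qed
  qed
qed

lemma orbit_inv:
  assumes "d \<in> D" "\<forall>x\<in>D. \<alpha> x \<in> D \<and> \<alpha> (\<alpha> x) = x \<and> \<alpha> x \<noteq> x"
  shows "orbit \<alpha> d = {d, \<alpha> d}"
proof
  show "orbit \<alpha> d \<subseteq> {d, \<alpha> d}" by (rule orbit_closed) (use assms in auto)
  show "{d, \<alpha> d} \<subseteq> orbit \<alpha> d" using self_in_orbit[of d \<alpha>] in_orbit[where n=1 and f=\<alpha> and x=d] by simp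
qed

lemma parity_contra:
  assumes fin: "finite D" and s: "bij_betw \<sigma> D D" and fv: "\<forall>v\<in>cycs D \<sigma>. card v = 4"
    and inv: "\<forall>x\<in>D. \<alpha> x \<in> D \<and> \<alpha> (\<alpha> x) = x \<and> \<alpha> x \<noteq> x" and aD: "a \<in> D" and b: "b = \<alpha> a"
    and nc: "(a,b) \<notin> map_conn D (\<lambda>x. \<alpha> (tr a b x)) \<sigma>"
  shows False
proof -
  define \<alpha>' where "\<alpha>' = (\<lambda>x. \<alpha> (tr a b x))"
  define R where "R = map_conn D \<alpha>' \<sigma>"
  define K where "K = R``{a}"
  have bD: "b \<in> D" using inv aD b by auto
  have sD: "\<sigma> ` D \<subseteq> D" using s by (auto simp: bij_betw_def)
  have a'D: "\<alpha>' ` D \<subseteq> D" using inv aD bD by (auto simp: \<alpha>'_def tr_def)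
  have KD: "K \<subseteq> D" unfolding K_def R_def using conn_in_D[OF a'D sD _ aD] by auto
  have finK: "finite K" using KD fin finite_subset by blast
  have aK: "a \<in> K" unfolding K_def R_def using conn_refl by simp
  have bK: "b \<notin> K" using nc unfolding K_def R_def \<alpha>'_def by simp
  have sK: "\<sigma> y \<in> K" if "y \<in> K" for y
  proof -
    have "(a,y) \<in> R" "y \<in> D" using that KD K_def by auto
    then have "(a, \<sigma> y) \<in> R" unfolding R_def by (rule conn_transE[OF _ conn_steps(2)])
    then show ?thesis unfolding K_def by simp
  qed
  have a'K: "\<alpha>' y \<in> K" if "y \<in> K" for y
  proof -
    have "(a,y) \<in> R" "y \<in> D" using that KD K_def by auto
    then have "(a, \<alpha>' y) \<in> R" unfolding R_def by (rule conn_transE[OF _ conn_steps(1)])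
    then show ?thesis unfolding K_def by simp
  qed
  \<comment> \<open>K is a union of vertices\<close>
  define C where "C = (\<lambda>y. orbit \<sigma> y) ` K"
  have UC: "\<Union>C = K"
  proof
    show "\<Union>C \<subseteq> K" unfolding C_def using orbit_closed[of _ K \<sigma>] sK by blast
    show "K \<subseteq> \<Union>C" unfolding C_def using self_in_orbit by fast
  qed
  have c4: "4 * card C = card K"
  proof -
    have "4 * card C = card (\<Union>C)"
    proof (rule card_partition)
      show "finite C" using finK C_def by simp
      show "finite (\<Union>C)" using UC finK by simp
      show "card c = 4" if "c \<in> C" for c using that fv KD unfolding C_def cycs_def by blast
      show "c1 \<inter> c2 = {}" if h: "c1 \<in> C" "c2 \<in> C" "c1 \<noteq> c2" for c1 c2
      proof (rule ccontr)
        assume "c1 \<inter> c2 \<noteq> {}"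
        then obtain z where z: "z \<in> c1" "z \<in> c2" by blast
        obtain y1 y2 where y: "y1 \<in> K" "y2 \<in> K" "c1 = orbit \<sigma> y1" "c2 = orbit \<sigma> y2"
          using h C_def by auto
        have "orbit \<sigma> z = c1" using orbit_eq[OF fin s, of y1 z] y z KD by auto
        moreover have "orbit \<sigma> z = c2" using orbit_eq[OF fin s, of y2 z] y z KD by auto
        ultimately show False using h by simp
      qed
    qed
    then show ?thesis using UC by simp
  qed
  \<comment> \<open>K minus a is a union of edges\<close>
  have eK: "\<alpha> y \<in> K - {a} \<and> \<alpha> y \<noteq> y \<and> \<alpha> (\<alpha> y) = y" if "y \<in> K - {a}" for y
  proof -
    have y: "y \<in> D" "y \<noteq> a" "y \<noteq> b" using that KD bK by auto
    then have "\<alpha>' y = \<alpha> y" by (simp add: \<alpha>'_def tr_def)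
    then have "\<alpha> y \<in> K" using a'K[of y] that by simp
    moreover have "\<alpha> y \<noteq> a"
    proof
      assume "\<alpha> y = a" then have "\<alpha> (\<alpha> y) = b" using b by simp
      moreover have "\<alpha> (\<alpha> y) = y" using inv y(1) by blast
      ultimately show False using y(3) by simp
    qed
    moreover have "\<alpha> y \<noteq> y" "\<alpha> (\<alpha> y) = y" using inv y(1) by blast+
    ultimately show ?thesis by simp
  qed
  define C2 where "C2 = (\<lambda>y. {y, \<alpha> y}) ` (K - {a})"
  have UC2: "\<Union>C2 = K - {a}" unfolding C2_def using eK by blast
  have c2: "2 * card C2 = card (K - {a})"
  proof -
    have "2 * card C2 = card (\<Union>C2)"
    proof (rule card_partition)
      show "finite C2" using finK C2_def by simp
      show "finite (\<Union>C2)" using UC2 finK by simp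
      show "card c = 2" if hc: "c \<in> C2" for c
      proof -
        obtain y where y: "y \<in> K - {a}" "c = {y, \<alpha> y}" using hc C2_def by auto
        then have "\<alpha> y \<noteq> y" using eK[OF y(1)] by simp
        then show ?thesis using y(2) by simp
      qed
      show "c1 \<inter> c2 = {}" if h: "c1 \<in> C2" "c2 \<in> C2" "c1 \<noteq> c2" for c1 c2
      proof (rule ccontr)
        assume "c1 \<inter> c2 \<noteq> {}"
        then obtain z where z: "z \<in> c1" "z \<in> c2" by blast
        obtain y1 y2 where y: "y1 \<in> K - {a}" "y2 \<in> K - {a}" "c1 = {y1, \<alpha> y1}" "c2 = {y2, \<alpha> y2}"
          using h C2_def by auto
        have "c1 = {z, \<alpha> z}" using z y eK[OF y(1)] by auto
        moreover have "c2 = {z, \<alpha> z}" using z y eK[OF y(2)] by auto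
        ultimately show False using h by simp
      qed
    qed
    then show ?thesis using UC2 by simp
  qed
  have "card K = card (K - {a}) + 1" using card_Suc_Diff1[OF finK aK] by simp
  then have "4 * card C = 2 * card C2 + 1" using c4 c2 by simp
  then show False by presburger
qed

theorem lemma2p6:
  fixes D :: "'a set" and \<alpha> \<sigma> :: "'a \<Rightarrow> 'a" and P :: "'a set"
  assumes "plane_map D \<alpha> \<sigma>"
    and "four_valent D \<sigma>"
    and "P \<in> map_faces D \<alpha> \<sigma>"
  shows "\<forall>d\<in>P. \<forall>d'\<in>P. d \<noteq> d' \<longrightarrow> dart_edge \<alpha> d \<noteq> dart_edge \<alpha> d'"
proof (intro ballI impI)
  fix d d' assume d: "d \<in> P" "d' \<in> P" "d \<noteq> d'"
  have cm: "comb_map D \<alpha> \<sigma>" and pl: "int (card (map_vertices D \<sigma>)) - int (card (map_edges D \<alpha>))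
       + int (card (map_faces D \<alpha> \<sigma>)) = 2 * int (card (map_components D \<alpha> \<sigma>))"
    using assms(1) by (auto simp: plane_map_def)
  have fin: "finite D" and s: "bij_betw \<sigma> D D" and inv: "\<forall>x\<in>D. \<alpha> x \<in> D \<and> \<alpha> (\<alpha> x) = x \<and> \<alpha> x \<noteq> x"
    using cm by (auto simp: comb_map_def)
  have sD: "\<sigma> ` D \<subseteq> D" using s by (auto simp: bij_betw_def)
  have aD: "\<alpha> ` D \<subseteq> D" using inv by auto
  have abij: "bij_betw \<alpha> D D" by (rule bij_betw_byWitness[where f'=\<alpha>]) (use inv in auto)
  define \<phi> where "\<phi> = (\<lambda>x. \<sigma> (\<alpha> x))"
  have fp: "face_perm \<alpha> \<sigma> = \<phi>" by (simp add: face_perm_def \<phi>_def comp_def)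
  have phibij: "bij_betw \<phi> D D" using bij_betw_trans[OF abij s] by (simp add: \<phi>_def comp_def)
  obtain x0 where x0: "x0 \<in> D" "P = orbit \<phi> x0" using assms(3) fp by (auto simp: map_faces_def)
  have PD: "P \<subseteq> D" using x0 orbit_sub_D[of \<phi> D x0] phibij by (auto simp: bij_betw_def)
  have dD: "d \<in> D" using d PD by auto
  show "dart_edge \<alpha> d \<noteq> dart_edge \<alpha> d'"
  proof
    assume eq: "dart_edge \<alpha> d = dart_edge \<alpha> d'"
    have d'eq: "d' = \<alpha> d" using eq d(3) by (auto simp: dart_edge_def doubleton_eq_iff)
    define a where "a = d"
    define b where "b = \<alpha> a"
    have bD: "b \<in> D" using aD dD a_def b_def by auto
    have ab: "a \<noteq> b" using inv dD a_def b_def by auto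
    have "orbit \<phi> d = P" using orbit_eq[OF fin phibij x0(1)] d(1) x0(2) by simp
    then have bphi: "b \<in> orbit \<phi> a" using d(2) d'eq a_def b_def by simp
    define \<alpha>' where "\<alpha>' = (\<lambda>x. \<alpha> (tr a b x))"
    have a'bij: "bij_betw \<alpha>' D D" unfolding \<alpha>'_def using bij_comp_tr[OF abij _ bD] dD a_def by simp
    have "b \<in> orbit \<alpha> a" using in_orbit[where n=1 and f=\<alpha> and x=a] b_def by simp
    then have ca: "card (cycs D \<alpha>') = card (cycs D \<alpha>) + 1"
      using cyc_tr(1)[OF fin abij _ bD ab] dD a_def \<alpha>'_def by simp
    have "(\<lambda>x. \<sigma> (\<alpha>' x)) = (\<lambda>x. \<phi> (tr a b x))" by (simp add: \<phi>_def \<alpha>'_def)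
    then have cf: "card (cycs D (\<lambda>x. \<sigma> (\<alpha>' x))) = card (cycs D \<phi>) + 1"
      using cyc_tr(1)[OF fin phibij _ bD ab bphi] dD a_def by simp
    have E: "card (cycs D \<sigma>) + card (cycs D \<alpha>') + card (cycs D (\<lambda>x. \<sigma> (\<alpha>' x)))
           \<le> card D + 2 * card (D // map_conn D \<alpha>' \<sigma>)"
      using euler_ineq[OF fin s a'bij] .
    have V: "map_vertices D \<sigma> = cycs D \<sigma>" by (simp add: map_vertices_def cycs_def)
    have F: "map_faces D \<alpha> \<sigma> = cycs D \<phi>" by (simp add: map_faces_def cycs_def fp)
    have Ed: "map_edges D \<alpha> = cycs D \<alpha>"
      unfolding map_edges_def cycs_def dart_edge_def using orbit_inv[OF _ inv] by simp
    have UD: "\<Union>(cycs D \<alpha>) = D"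
    proof
      show "\<Union>(cycs D \<alpha>) \<subseteq> D"
      proof
        fix z assume "z \<in> \<Union>(cycs D \<alpha>)"
        then obtain y where "y \<in> D" "z \<in> orbit \<alpha> y" by (auto simp: cycs_def)
        then show "z \<in> D" using orbit_sub_D[OF aD] by blast
      qed
      show "D \<subseteq> \<Union>(cycs D \<alpha>)"
      proof
        fix z assume zD: "z \<in> D"
        have "z \<in> orbit \<alpha> z" by (rule self_in_orbit)
        then show "z \<in> \<Union>(cycs D \<alpha>)" using zD unfolding cycs_def by blast
      qed
    qed
    have cD: "2 * card (cycs D \<alpha>) = card D"
    proof -
      have "2 * card (cycs D \<alpha>) = card (\<Union>(cycs D \<alpha>))"
      proof (rule card_partition)
        show "finite (cycs D \<alpha>)" using fin by (simp add: cycs_def)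
        have "\<Union>(cycs D \<alpha>) \<subseteq> D" using UD by simp
        then show "finite (\<Union>(cycs D \<alpha>))" using fin finite_subset by blast
        show "card c = 2" if hc: "c \<in> cycs D \<alpha>" for c
        proof -
          obtain y where y: "y \<in> D" "c = orbit \<alpha> y" using hc by (auto simp: cycs_def)
          then have "c = {y, \<alpha> y}" using orbit_inv[OF y(1) inv] by simp
          moreover have "\<alpha> y \<noteq> y" using inv y(1) by blast
          ultimately show ?thesis by simp
        qed
        show "c1 \<inter> c2 = {}" if h: "c1 \<in> cycs D \<alpha>" "c2 \<in> cycs D \<alpha>" "c1 \<noteq> c2" for c1 c2
        proof (rule ccontr)
          assume "c1 \<inter> c2 \<noteq> {}"
          then obtain z where z: "z \<in> c1" "z \<in> c2" by blast
          obtain y1 y2 where y: "y1 \<in> D" "y2 \<in> D" "c1 = orbit \<alpha> y1" "c2 = orbit \<alpha> y2"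
            using h by (auto simp: cycs_def)
          have "orbit \<alpha> z = c1" using orbit_eq[OF fin abij y(1)] y z by auto
          moreover have "orbit \<alpha> z = c2" using orbit_eq[OF fin abij y(2)] y z by auto
          ultimately show False using h by simp
        qed
      qed
      moreover note UD
      ultimately show ?thesis by simp
    qed
    have pl': "int (card (cycs D \<sigma>)) - int (card (cycs D \<alpha>)) + int (card (cycs D \<phi>))
       = 2 * int (card (D // map_conn D \<alpha> \<sigma>))"
      using pl unfolding V F Ed map_components_def .
    have lt: "card (D // map_conn D \<alpha> \<sigma>) < card (D // map_conn D \<alpha>' \<sigma>)"
      using pl' E ca cf cD by linarith
    have aDm: "a \<in> D" using dD a_def by simp
    have Q2: "(a,b) \<in> map_conn D \<alpha>' \<sigma> \<Longrightarrow> D//map_conn D \<alpha>' \<sigma> = D//map_conn D \<alpha> \<sigma>"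
      unfolding \<alpha>'_def
      by (rule quot_lemma(2)[OF fin conn_refl conn_sym conn_trans conn_step_lemma(1)[OF aD aDm b_def]
          conn_trans conn_step_lemma(2)[OF aD aDm b_def]])
    have nc: "(a,b) \<notin> map_conn D \<alpha>' \<sigma>"
    proof
      assume "(a,b) \<in> map_conn D \<alpha>' \<sigma>"
      then show False using Q2 lt by simp
    qed
    have fv: "\<forall>v\<in>cycs D \<sigma>. card v = 4" using assms(2) V by (simp add: four_valent_def)
    show False using parity_contra[OF fin s fv inv aDm b_def] nc unfolding \<alpha>'_def by simp
  qed
qed

end
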